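(* Let $X_1,\dots,X_N$ be independent nonnegative random variables. (1) Suppose that for every $2\le j\le N$ there exists $\varphi_j\in\mathfrak{F}$ such that $\overline{F}_{X_j}(\varphi_j(x))=O(\overline{F}_{X_1}(x))$ and $\overline{F}_{X_1}(x/\varphi_j(x))=O(\overline{F}_{X_1}(x))$. Then $\overline{F}_{\prod_{i=1}^N X_i}(x)=O(\overline{F}_{X_1}(x))$. (2) Suppose that for every $2\le j\le N$ there exists $\varphi_j\in\mathfrak{F}$ such that $\overline{F}_{X_j}(\varphi_j(x))=O(\overline{F}_{X_1}(x))$ and $\overline{F}_{X_1}(x-\varphi_j(x))=O(\overline{F}_{X_1}(x))$. Then $\overline{F}_{\sum_{i=1}^N X_i}(x)=O(\overline{F}_{X_1}(x))$.
   Context: $\overline{F}_Y(x)=\Pr(Y>x)$; $f(x)=O(g(x))$ means $\limsup_{x\to\infty}f(x)/g(x)<\infty$. $\mathfrak{F}$ is the class of functions $\varphi:\mathbb{R}_{\ge0}\to\mathbb{R}_{\ge0}$ with $\lim_{x\to\infty}\varphi(x)=\infty$ and $\lim_{x\to\infty}\varphi(x)/x=0$. *)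

theory Defs
  imports "HOL-Probability.Probability" "HOL-Library.Landau_Symbols"
begin

definition tail :: "'a measure \<Rightarrow> ('a \<Rightarrow> real) \<Rightarrow> real \<Rightarrow> real" where
  "tail M Y x = measure M {\<omega> \<in> space M. x < Y \<omega>}"

definition frakF :: "(real \<Rightarrow> real) \<Rightarrow> bool" where
  "frakF \<phi> \<longleftrightarrow> (\<forall>x\<ge>0. \<phi> x \<ge> 0) \<and> filterlim \<phi> at_top at_top
     \<and> ((\<lambda>x. \<phi> x / x) \<longlongrightarrow> 0) at_top"

end

theory Submission
  imports Defs "HOL-Real_Asymp.Real_Asymp"
begin

lemma step_O:
  fixes T T' B F \<phi> \<psi> :: "real \<Rightarrow> real"
  assumes "T \<in> O[at_top](F)" "(\<lambda>x. B (\<phi> x)) \<in> O[at_top](F)"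
    "(\<lambda>x. F (\<psi> x)) \<in> O[at_top](F)" "filterlim \<psi> at_top at_top"
    "eventually (\<lambda>x. T' x \<le> B (\<phi> x) + T (\<psi> x)) at_top" "\<And>x. T' x \<ge> 0"
  shows "T' \<in> O[at_top](F)"
proof -
  have "(\<lambda>x. T (\<psi> x)) \<in> O[at_top](\<lambda>x. F (\<psi> x))"
    using landau_o.big.compose[OF assms(1) assms(4)] .
  then have "(\<lambda>x. T (\<psi> x)) \<in> O[at_top](F)" using assms(3) landau_o.big_trans by blast
  then have s: "(\<lambda>x. B (\<phi> x) + T (\<psi> x)) \<in> O[at_top](F)"
    using assms(2) sum_in_bigo by blast
  have "T' \<in> O[at_top](\<lambda>x. B (\<phi> x) + T (\<psi> x))"
    by (rule landau_o.big_mono) (use assms(5,6) in \<open>auto elim!: eventually_mono\<close>)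
  then show ?thesis using s landau_o.big_trans by blast
qed

lemma tail_nonneg: "tail M Y x \<ge> 0"
  by (simp add: tail_def)

lemma tail_sum_bound:
  assumes "prob_space M" "A \<in> borel_measurable M" "B \<in> borel_measurable M"
  shows "tail M (\<lambda>\<omega>. A \<omega> + B \<omega>) x \<le> tail M B p + tail M A (x - p)"
proof -
  interpret prob_space M by fact
  have "{\<omega> \<in> space M. x < A \<omega> + B \<omega>} \<subseteq> {\<omega> \<in> space M. p < B \<omega>} \<union> {\<omega> \<in> space M. x - p < A \<omega>}"
    by auto
  then have "tail M (\<lambda>\<omega>. A \<omega> + B \<omega>) x \<le> measure M ({\<omega> \<in> space M. p < B \<omega>} \<union> {\<omega> \<in> space M. x - p < A \<omega>})"
    unfolding tail_def using assms by (intro finite_measure_mono) auto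
  also have "\<dots> \<le> tail M B p + tail M A (x - p)"
    unfolding tail_def using assms by (intro measure_Un_le) auto
  finally show ?thesis .
qed

lemma tail_prod_bound:
  assumes "prob_space M" "A \<in> borel_measurable M" "B \<in> borel_measurable M"
    "\<forall>\<omega>\<in>space M. A \<omega> \<ge> 0" "\<forall>\<omega>\<in>space M. B \<omega> \<ge> 0" "x \<ge> 0" "p > 0"
  shows "tail M (\<lambda>\<omega>. A \<omega> * B \<omega>) x \<le> tail M B p + tail M A (x / p)"
proof -
  interpret prob_space M by fact
  have "{\<omega> \<in> space M. x < A \<omega> * B \<omega>} \<subseteq> {\<omega> \<in> space M. p < B \<omega>} \<union> {\<omega> \<in> space M. x / p < A \<omega>}"
  proof safe
    fix \<omega> assume w: "\<omega> \<in> space M" "x < A \<omega> * B \<omega>" "\<not> x / p < A \<omega>"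
    then have "A \<omega> * B \<omega> \<le> A \<omega> * p \<or> p < B \<omega>" using assms(4) w
      by (meson less_eq_real_def mult_left_mono not_le)
    moreover have "A \<omega> * p \<le> x" using w assms(7) by (simp add: field_simps)
    ultimately show "p < B \<omega>" using w by linarith
  qed
  then have "tail M (\<lambda>\<omega>. A \<omega> * B \<omega>) x \<le> measure M ({\<omega> \<in> space M. p < B \<omega>} \<union> {\<omega> \<in> space M. x / p < A \<omega>})"
    unfolding tail_def using assms by (intro finite_measure_mono) auto
  also have "\<dots> \<le> tail M B p + tail M A (x / p)"
    unfolding tail_def using assms by (intro measure_Un_le) auto
  finally show ?thesis .
qed

lemma frakF_pos: assumes "frakF \<phi>" shows "eventually (\<lambda>x. \<phi> x > 0) at_top"
  using assms unfolding frakF_def by (simp add: filterlim_at_top_dense)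

lemma frakF_small: assumes "frakF \<phi>" "c > 0" shows "eventually (\<lambda>x. \<phi> x < c * x) at_top"
proof -
  have "eventually (\<lambda>x. \<phi> x / x < c) at_top"
    using assms(2) conjunct2[OF conjunct2[OF assms(1)[unfolded frakF_def]]] order_tendstoD(2) by blast
  then show ?thesis using eventually_gt_at_top[of 0]
    by eventually_elim (simp add: divide_less_eq)
qed

lemma frakF_minus: assumes "frakF \<phi>" shows "filterlim (\<lambda>x. x - \<phi> x) at_top at_top"
proof (rule filterlim_at_top_mono[of "\<lambda>x. x / 2"])
  show "filterlim (\<lambda>x::real. x / 2) at_top at_top"
    by real_asymp
  show "eventually (\<lambda>x. x / 2 \<le> x - \<phi> x) at_top"
    using frakF_small[OF assms, of "1/2"] by (auto elim!: eventually_mono)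
qed

lemma frakF_div: assumes "frakF \<phi>" shows "filterlim (\<lambda>x. x / \<phi> x) at_top at_top"
  unfolding filterlim_at_top
proof
  fix Z :: real
  have c: "1 / (\<bar>Z\<bar> + 1) > 0" by simp
  show "eventually (\<lambda>x. Z \<le> x / \<phi> x) at_top"
    using frakF_small[OF assms c] frakF_pos[OF assms] eventually_gt_at_top[of 0]
  proof eventually_elim
    case (elim x)
    then have "\<phi> x * (\<bar>Z\<bar> + 1) < x" by (simp add: field_simps)
    then have "\<bar>Z\<bar> + 1 \<le> x / \<phi> x" using elim by (simp add: field_simps)
    then show ?case by linarith
  qed
qed

theorem theorem11:
  fixes M :: "'a measure" and X :: "nat \<Rightarrow> 'a \<Rightarrow> real" and N :: nat
  assumes "prob_space M"
    and "N \<ge> 1"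
    and "prob_space.indep_vars M (\<lambda>_. borel) X {1..N}"
    and "\<forall>i\<in>{1..N}. \<forall>\<omega>\<in>space M. X i \<omega> \<ge> 0"
  shows
    "((\<forall>j\<in>{2..N}. \<exists>\<phi>. frakF \<phi>
          \<and> (\<lambda>x. tail M (X j) (\<phi> x)) \<in> O[at_top](\<lambda>x. tail M (X 1) x)
          \<and> (\<lambda>x. tail M (X 1) (x / \<phi> x)) \<in> O[at_top](\<lambda>x. tail M (X 1) x))
       \<longrightarrow> (\<lambda>x. tail M (\<lambda>\<omega>. \<Prod>i\<in>{1..N}. X i \<omega>) x) \<in> O[at_top](\<lambda>x. tail M (X 1) x))
     \<and>
     ((\<forall>j\<in>{2..N}. \<exists>\<phi>. frakF \<phi>
          \<and> (\<lambda>x. tail M (X j) (\<phi> x)) \<in> O[at_top](\<lambda>x. tail M (X 1) x)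
          \<and> (\<lambda>x. tail M (X 1) (x - \<phi> x)) \<in> O[at_top](\<lambda>x. tail M (X 1) x))
       \<longrightarrow> (\<lambda>x. tail M (\<lambda>\<omega>. \<Sum>i\<in>{1..N}. X i \<omega>) x) \<in> O[at_top](\<lambda>x. tail M (X 1) x))"
proof -
  interpret prob_space M by fact
  have meas: "\<And>i. i \<in> {1..N} \<Longrightarrow> X i \<in> borel_measurable M"
    using assms(3) unfolding indep_vars_def by auto
  let ?F = "\<lambda>x. tail M (X 1) x"
  show ?thesis
  proof (intro conjI impI)
    assume H: "\<forall>j\<in>{2..N}. \<exists>\<phi>. frakF \<phi>
          \<and> (\<lambda>x. tail M (X j) (\<phi> x)) \<in> O[at_top](\<lambda>x. tail M (X 1) x)
          \<and> (\<lambda>x. tail M (X 1) (x / \<phi> x)) \<in> O[at_top](\<lambda>x. tail M (X 1) x)"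
    have "n \<le> N \<longrightarrow> (\<lambda>x. tail M (\<lambda>\<omega>. \<Prod>i\<in>{1..n}. X i \<omega>) x) \<in> O[at_top](?F)"
      if "n \<ge> 1" for n
      using that
    proof (induction n rule: dec_induct)
      case base
      then show ?case by simp
    next
      case (step n)
      show ?case
      proof
        assume nN: "Suc n \<le> N"
        then obtain \<phi> where \<phi>: "frakF \<phi>" "(\<lambda>x. tail M (X (Suc n)) (\<phi> x)) \<in> O[at_top](?F)"
          "(\<lambda>x. ?F (x / \<phi> x)) \<in> O[at_top](?F)"
          using H step(1) by fastforce
        have IH: "(\<lambda>x. tail M (\<lambda>\<omega>. \<Prod>i\<in>{1..n}. X i \<omega>) x) \<in> O[at_top](?F)"
          using step nN by simp
        have pm: "(\<lambda>\<omega>. \<Prod>i\<in>{1..n}. X i \<omega>) \<in> borel_measurable M"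
          using meas nN by (intro borel_measurable_prod) auto
        have pn: "\<forall>\<omega>\<in>space M. (\<Prod>i\<in>{1..n}. X i \<omega>) \<ge> 0"
          using assms(4) nN by (auto intro!: prod_nonneg)
        have eq: "(\<lambda>\<omega>. \<Prod>i\<in>{1..Suc n}. X i \<omega>) = (\<lambda>\<omega>. (\<Prod>i\<in>{1..n}. X i \<omega>) * X (Suc n) \<omega>)"
          using step(1) by (simp add: prod.nat_ivl_Suc')
        show "(\<lambda>x. tail M (\<lambda>\<omega>. \<Prod>i\<in>{1..Suc n}. X i \<omega>) x) \<in> O[at_top](?F)"
          unfolding eq
        proof (rule step_O[where \<phi>=\<phi> and \<psi>="\<lambda>x. x / \<phi> x" and B="tail M (X (Suc n))" and F="?F" and T="tail M (\<lambda>\<omega>. \<Prod>i\<in>{1..n}. X i \<omega>)", OF IH \<phi>(2) \<phi>(3) frakF_div[OF \<phi>(1)]])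
          show "eventually (\<lambda>x. tail M (\<lambda>\<omega>. (\<Prod>i\<in>{1..n}. X i \<omega>) * X (Suc n) \<omega>) x
             \<le> tail M (X (Suc n)) (\<phi> x) + tail M (\<lambda>\<omega>. \<Prod>i\<in>{1..n}. X i \<omega>) (x / \<phi> x)) at_top"
            using frakF_pos[OF \<phi>(1)] eventually_ge_at_top[of 0]
            by eventually_elim
               (rule tail_prod_bound[OF assms(1) pm meas pn], use assms(4) nN step(1) in auto)
        qed (rule tail_nonneg)
      qed
    qed
    then show "(\<lambda>x. tail M (\<lambda>\<omega>. \<Prod>i\<in>{1..N}. X i \<omega>) x) \<in> O[at_top](?F)"
      using assms(2) by simp
  next
    assume H: "\<forall>j\<in>{2..N}. \<exists>\<phi>. frakF \<phi>
          \<and> (\<lambda>x. tail M (X j) (\<phi> x)) \<in> O[at_top](\<lambda>x. tail M (X 1) x)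
          \<and> (\<lambda>x. tail M (X 1) (x - \<phi> x)) \<in> O[at_top](\<lambda>x. tail M (X 1) x)"
    have "n \<le> N \<longrightarrow> (\<lambda>x. tail M (\<lambda>\<omega>. \<Sum>i\<in>{1..n}. X i \<omega>) x) \<in> O[at_top](?F)"
      if "n \<ge> 1" for n
      using that
    proof (induction n rule: dec_induct)
      case base
      then show ?case by simp
    next
      case (step n)
      show ?case
      proof
        assume nN: "Suc n \<le> N"
        then obtain \<phi> where \<phi>: "frakF \<phi>" "(\<lambda>x. tail M (X (Suc n)) (\<phi> x)) \<in> O[at_top](?F)"
          "(\<lambda>x. ?F (x - \<phi> x)) \<in> O[at_top](?F)"
          using H step(1) by fastforce
        have IH: "(\<lambda>x. tail M (\<lambda>\<omega>. \<Sum>i\<in>{1..n}. X i \<omega>) x) \<in> O[at_top](?F)"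
          using step nN by simp
        have pm: "(\<lambda>\<omega>. \<Sum>i\<in>{1..n}. X i \<omega>) \<in> borel_measurable M"
          using meas nN by (intro borel_measurable_sum) auto
        have eq: "(\<lambda>\<omega>. \<Sum>i\<in>{1..Suc n}. X i \<omega>) = (\<lambda>\<omega>. (\<Sum>i\<in>{1..n}. X i \<omega>) + X (Suc n) \<omega>)"
          using step(1) by (simp add: sum.nat_ivl_Suc')
        show "(\<lambda>x. tail M (\<lambda>\<omega>. \<Sum>i\<in>{1..Suc n}. X i \<omega>) x) \<in> O[at_top](?F)"
          unfolding eq
        proof (rule step_O[where \<phi>=\<phi> and \<psi>="\<lambda>x. x - \<phi> x" and B="tail M (X (Suc n))" and F="?F" and T="tail M (\<lambda>\<omega>. \<Sum>i\<in>{1..n}. X i \<omega>)", OF IH \<phi>(2) \<phi>(3) frakF_minus[OF \<phi>(1)]])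
          show "eventually (\<lambda>x. tail M (\<lambda>\<omega>. (\<Sum>i\<in>{1..n}. X i \<omega>) + X (Suc n) \<omega>) x
             \<le> tail M (X (Suc n)) (\<phi> x) + tail M (\<lambda>\<omega>. \<Sum>i\<in>{1..n}. X i \<omega>) (x - \<phi> x)) at_top"
            by (intro always_eventually allI tail_sum_bound[OF assms(1) pm meas]) (use nN in auto)
        qed (rule tail_nonneg)
      qed
    qed
    then show "(\<lambda>x. tail M (\<lambda>\<omega>. \<Sum>i\<in>{1..N}. X i \<omega>) x) \<in> O[at_top](?F)"
      using assms(2) by simp
  qed
qed

end
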